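(* Let $d\in D^\times$ with $\rho(d)=d$, and let $F'\subseteq D$ be a subfield containing $F$, fixed pointwise by $\rho$, such that $F[d]|F$ and $F'|F$ are $F$-isomorphic. Then there is $g\in D^\times$ with $gF[d]\rho(g)=F'$. Moreover, if $d\notin F$, every $g\in D^\times$ with $gF[d]g^{-1}=F'$ satisfies $gF[d]\rho(g)=F'$.
   Context: $F$ is a non-archimedean local field of odd residue characteristic. $D$ is a non-split quaternion division algebra with centre $F$, and $\rho$ is an orthogonal anti-involution of $D$ (an $F$-linear involutive anti-automorphism with $3$-dimensional fixed space). *)

theory Defs
  imports Main
begin

text \<open>The quaternion division algebra D is modelled as a type of class division_ring;
  its centre F is identified with the subset center of D.\<close>

definition center :: "'a::ring_1 set" where
  "center = {c. \<forall>x. c * x = x * c}"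

definition lin_comb :: "'a::ring_1 list \<Rightarrow> 'a list \<Rightarrow> 'a" where
  "lin_comb cs bs = sum_list (map2 (*) cs bs)"

definition lin_indep_over :: "'a::ring_1 set \<Rightarrow> 'a list \<Rightarrow> bool" where
  "lin_indep_over K bs \<longleftrightarrow>
     (\<forall>cs. length cs = length bs \<and> set cs \<subseteq> K \<and> lin_comb cs bs = 0 \<longrightarrow> set cs \<subseteq> {0})"

definition span_over :: "'a::ring_1 set \<Rightarrow> 'a list \<Rightarrow> 'a set" where
  "span_over K bs = {lin_comb cs bs | cs. length cs = length bs \<and> set cs \<subseteq> K}"

definition has_dim_over :: "'a::ring_1 set \<Rightarrow> 'a set \<Rightarrow> nat \<Rightarrow> bool" where
  "has_dim_over K V n \<longleftrightarrow>
     (\<exists>bs. length bs = n \<and> set bs \<subseteq> V \<and> lin_indep_over K bs \<and> span_over K bs = V)"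

definition val_ge :: "('a::ring_1 \<Rightarrow> int) \<Rightarrow> 'a \<Rightarrow> int \<Rightarrow> bool" where
  "val_ge v x N \<longleftrightarrow> x = 0 \<or> v x \<ge> N"

definition discrete_valuation :: "'a::ring_1 set \<Rightarrow> ('a \<Rightarrow> int) \<Rightarrow> bool" where
  "discrete_valuation K v \<longleftrightarrow>
     (\<forall>x\<in>K. \<forall>y\<in>K. x \<noteq> 0 \<and> y \<noteq> 0 \<longrightarrow> v (x * y) = v x + v y) \<and>
     (\<forall>x\<in>K. \<forall>y\<in>K. x \<noteq> 0 \<and> y \<noteq> 0 \<and> x + y \<noteq> 0 \<longrightarrow> v (x + y) \<ge> min (v x) (v y)) \<and>
     (\<exists>\<pi>\<in>K. \<pi> \<noteq> 0 \<and> v \<pi> = 1)"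

definition val_complete_field :: "'a::ring_1 set \<Rightarrow> ('a \<Rightarrow> int) \<Rightarrow> bool" where
  "val_complete_field K v \<longleftrightarrow>
     (\<forall>X::nat \<Rightarrow> 'a. (\<forall>n. X n \<in> K) \<and> (\<forall>N. \<exists>M. \<forall>m\<ge>M. \<forall>n\<ge>M. val_ge v (X m - X n) N) \<longrightarrow>
        (\<exists>L\<in>K. \<forall>N. \<exists>M. \<forall>n\<ge>M. val_ge v (X n - L) N))"

definition finite_residue_field :: "'a::ring_1 set \<Rightarrow> ('a \<Rightarrow> int) \<Rightarrow> bool" where
  "finite_residue_field K v \<longleftrightarrow>
     (\<exists>R. finite R \<and> R \<subseteq> K \<and> (\<forall>x\<in>K. val_ge v x 0 \<longrightarrow> (\<exists>r\<in>R. val_ge v (x - r) 1)))"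

text \<open>Residue characteristic odd iff 2 is a unit of the valuation ring.\<close>
definition odd_residue_char :: "('a::ring_1 \<Rightarrow> int) \<Rightarrow> bool" where
  "odd_residue_char v \<longleftrightarrow> (2::'a) \<noteq> 0 \<and> v 2 = 0"

definition nonarch_local_field_odd :: "'a::ring_1 set \<Rightarrow> bool" where
  "nonarch_local_field_odd K \<longleftrightarrow>
     (\<exists>v. discrete_valuation K v \<and> val_complete_field K v \<and> finite_residue_field K v \<and> odd_residue_char v)"

definition orthogonal_anti_involution :: "('a::ring_1 \<Rightarrow> 'a) \<Rightarrow> bool" where
  "orthogonal_anti_involution \<rho> \<longleftrightarrow>
     (\<forall>x y. \<rho> (x + y) = \<rho> x + \<rho> y) \<and>
     (\<forall>c\<in>center. \<forall>x. \<rho> (c * x) = c * \<rho> x) \<and>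
     (\<forall>x y. \<rho> (x * y) = \<rho> y * \<rho> x) \<and>
     (\<forall>x. \<rho> (\<rho> x) = x) \<and>
     has_dim_over center {x. \<rho> x = x} 3"

definition adjoin :: "'a::ring_1 set \<Rightarrow> 'a \<Rightarrow> 'a set" where
  "adjoin K d = {\<Sum>i<n. c i * d ^ i | c n. \<forall>i<n. c i \<in> K}"

definition is_subfield :: "'a::division_ring set \<Rightarrow> bool" where
  "is_subfield L \<longleftrightarrow> 0 \<in> L \<and> 1 \<in> L \<and>
     (\<forall>x\<in>L. \<forall>y\<in>L. x + y \<in> L \<and> x * y \<in> L \<and> x * y = y * x) \<and>
     (\<forall>x\<in>L. - x \<in> L \<and> inverse x \<in> L)"

definition K_isomorphic :: "'a::ring_1 set \<Rightarrow> 'a set \<Rightarrow> 'a set \<Rightarrow> bool" where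
  "K_isomorphic K A B \<longleftrightarrow>
     (\<exists>\<phi>. bij_betw \<phi> A B \<and>
       (\<forall>x\<in>A. \<forall>y\<in>A. \<phi> (x + y) = \<phi> x + \<phi> y \<and> \<phi> (x * y) = \<phi> x * \<phi> y) \<and>
       \<phi> 1 = 1 \<and> (\<forall>c\<in>K. \<phi> c = c))"

end

theory Submission imports Defs "HOL-Algebra.Embedded_Algebras" begin

definition DR :: "'a::division_ring ring" where
  "DR = \<lparr>carrier = UNIV, mult = (*), one = 1, zero = 0, add = (+)\<rparr>"

lemma DR_simps [simp]:
  "carrier DR = UNIV" "x \<otimes>\<^bsub>DR\<^esub> y = x * y" "\<one>\<^bsub>DR\<^esub> = 1" "\<zero>\<^bsub>DR\<^esub> = 0" "x \<oplus>\<^bsub>DR\<^esub> y = x + y"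
  by (simp_all add: DR_def)

lemma ring_DR: "ring (DR :: 'a::division_ring ring)"
  apply (rule ringI)
  apply (rule abelian_groupI)
  apply (auto simp: algebra_simps)
  apply (metis right_minus)
  apply (rule monoidI)
  apply (auto simp: algebra_simps mult.assoc)
  done

lemma DR_neg [simp]: "\<ominus>\<^bsub>DR\<^esub> x = - (x::'a::division_ring)"
  using abelian_group.minus_equality[of DR "-x" x] ring.is_abelian_group[OF ring_DR]
  by simp

lemma inv_cancel1 [simp]: "(a::'a::division_ring) \<noteq> 0 \<Longrightarrow> inverse a * (a * b) = b"
  by (simp add: mult.assoc[symmetric])
lemma inv_cancel2 [simp]: "(a::'a::division_ring) \<noteq> 0 \<Longrightarrow> a * (inverse a * b) = b"
  by (simp add: mult.assoc[symmetric])

lemma comm_inverse: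
  fixes x z :: "'a::division_ring"
  assumes "x * z = z * x" shows "inverse x * z = z * inverse x"
proof (cases "x = 0")
  case True then show ?thesis by simp
next
  case False
  have "inverse x * z = inverse x * z * (x * inverse x)" using False by simp
  also have "\<dots> = inverse x * (x * z) * inverse x" by (simp add: mult.assoc assms)
  also have "\<dots> = z * inverse x" using False by (simp add: mult.assoc)
  finally show ?thesis .
qed

lemma comm_mult:
  fixes x y d :: "'a::ring"
  assumes "x * d = d * x" "y * d = d * y" shows "(x * y) * d = d * (x * y)"
  by (metis assms mult.assoc)

lemma pow_comm:
  fixes d x :: "'a::ring_1"
  assumes "d * x = x * d" shows "d ^ i * x = x * d ^ i"
  by (induct i) (simp_all add: mult.assoc[symmetric] assms, metis assms mult.assoc)

lemma sum_comm:
  fixes f :: "nat \<Rightarrow> 'a::ring"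
  assumes "\<And>i. i < n \<Longrightarrow> f i * x = x * f i"
  shows "sum f {..<n} * x = x * sum f {..<n}"
  by (simp add: sum_distrib_left sum_distrib_right assms)

lemma nat_aux:
  fixes k m :: nat assumes "k * m = 4" "2 \<le> k" "k \<noteq> 4" shows "k = 2"
proof -
  have "m \<noteq> 0"
  proof
    assume "m = 0" then show False using assms(1) by simp
  qed
  moreover have "m \<noteq> 1" using assms by auto
  ultimately have "2 \<le> m" by linarith
  hence "k * 2 \<le> k * m" by simp
  thus ?thesis using assms by linarith
qed

definition comm :: "'a::ring_1 set \<Rightarrow> 'a set" where
  "comm S = {z. \<forall>y\<in>S. z * y = y * z}"

lemma comm_1: "1 \<in> comm S" by (simp add: comm_def)

lemma comm_add:
  assumes "x \<in> comm S" "z \<in> comm S" shows "x + z \<in> comm S"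
proof -
  have "(x + z) * y = y * (x + z)" if "y \<in> S" for y
  proof -
    have "x * y = y * x" "z * y = y * z" using assms that unfolding comm_def by blast+
    thus ?thesis by (simp add: distrib_left distrib_right)
  qed
  thus ?thesis unfolding comm_def by blast
qed

lemma comm_mul:
  assumes "x \<in> comm S" "z \<in> comm S" shows "x * z \<in> comm S"
proof -
  have "(x * z) * y = y * (x * z)" if "y \<in> S" for y
  proof -
    have hx: "x * y = y * x" and hz: "z * y = y * z" using assms that unfolding comm_def by blast+
    have "(x * z) * y = x * (z * y)" by (rule mult.assoc)
    also have "\<dots> = x * (y * z)" by (simp only: hz)
    also have "\<dots> = (x * y) * z" by (rule mult.assoc[symmetric])
    also have "\<dots> = (y * x) * z" by (simp only: hx)
    also have "\<dots> = y * (x * z)" by (rule mult.assoc)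
    finally show ?thesis .
  qed
  thus ?thesis unfolding comm_def by blast
qed

lemma comm_neg:
  assumes "x \<in> comm S" shows "- x \<in> comm S"
proof -
  have "(- x) * y = y * (- x)" if "y \<in> S" for y
  proof -
    have "x * y = y * x" using assms that unfolding comm_def by blast
    thus ?thesis by simp
  qed
  thus ?thesis unfolding comm_def by blast
qed

lemma comm_inv:
  fixes x :: "'a::division_ring"
  assumes "x \<in> comm S" shows "inverse x \<in> comm S"
proof -
  have "inverse x * y = y * inverse x" if "y \<in> S" for y
  proof -
    have "x * y = y * x" using assms that unfolding comm_def by blast
    thus ?thesis by (rule comm_inverse)
  qed
  thus ?thesis unfolding comm_def by blast
qed

lemma center_I:
  fixes d :: "'a::ring_1" assumes "\<And>x. x * d = d * x" shows "d \<in> center"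
  unfolding center_def using assms[symmetric] by blast

lemma center_comm: "center = comm UNIV" by (simp add: center_def comm_def)

locale DRL = fixes R :: "'a::division_ring ring" (structure) assumes R_eq: "R = DR"

sublocale DRL \<subseteq> ring R unfolding R_eq by (rule ring_DR)

lemma DRL_DR: "DRL DR" by (simp add: DRL_def)

context DRL
begin

lemma R_simps [simp]: "carrier R = UNIV" "x \<otimes> y = x * y" "\<one> = 1" "\<zero> = 0" "x \<oplus> y = x + y"
  "\<ominus> x = - x"
  by (simp_all add: R_eq)

lemma subring_mk:
  assumes "1 \<in> H" "\<And>x y. x \<in> H \<Longrightarrow> y \<in> H \<Longrightarrow> x + y \<in> H"
    "\<And>x y. x \<in> H \<Longrightarrow> y \<in> H \<Longrightarrow> x * y \<in> H" "\<And>x. x \<in> H \<Longrightarrow> - x \<in> H"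
  shows "subring H R"
  by (rule subringI) (use assms in auto)

lemma subfield_mk:
  assumes "1 \<in> H" "\<And>x y. x \<in> H \<Longrightarrow> y \<in> H \<Longrightarrow> x + y \<in> H"
    "\<And>x y. x \<in> H \<Longrightarrow> y \<in> H \<Longrightarrow> x * y \<in> H" "\<And>x. x \<in> H \<Longrightarrow> - x \<in> H"
    "\<And>x. x \<in> H \<Longrightarrow> inverse x \<in> H" "\<And>x y. x \<in> H \<Longrightarrow> y \<in> H \<Longrightarrow> x * y = y * x"
  shows "subfield H R"
proof (rule subfieldI)
  have sr: "subring H R" by (rule subring_mk) (use assms in auto)
  show "subcring H R" by (rule subcringI[OF sr]) (use assms in auto)
  show "Units (R\<lparr>carrier := H\<rparr>) = H - {\<zero>}"
  proof
    show "Units (R\<lparr>carrier := H\<rparr>) \<subseteq> H - {\<zero>}"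
      unfolding Units_def by auto
    show "H - {\<zero>} \<subseteq> Units (R\<lparr>carrier := H\<rparr>)"
      unfolding Units_def using assms(5) by (auto intro!: bexI[of _ "inverse x" for x])
  qed
qed

lemma subalg_mk:
  assumes "subring V R" "\<And>k v. k \<in> F \<Longrightarrow> v \<in> V \<Longrightarrow> k * v \<in> V"
  shows "subalgebra F V R"
  using subalgebra.intro[OF subring.axioms(1)[OF assms(1)]] assms(2)
  unfolding subalgebra_axioms_def by auto

lemma lin_comb_combine: "lin_comb cs us = combine cs us"
  by (induct cs arbitrary: us; case_tac us; simp add: lin_comb_def)

lemma center_subfield: "subfield center R"
  unfolding center_comm
proof (rule subfield_mk)
  show "x * y = y * x" if "x \<in> comm UNIV" "y \<in> comm UNIV" for x y
    using that unfolding comm_def by blast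
qed (auto intro: comm_1 comm_add comm_mul comm_neg comm_inv)

lemma full_dim:
  assumes K: "subfield K R" and "dimension n K UNIV" "dimension n K E"
  shows "E = UNIV"
proof -
  obtain Vs where Vs: "set Vs \<subseteq> carrier R" "independent K Vs" "length Vs = n" "Span K Vs = E"
    using exists_base[OF K assms(3)] by blast
  have "Span K Vs = UNIV"
    using independent_length_eq_dimension[OF K assms(2) Vs(2)] Vs(3) by simp
  thus ?thesis using Vs(4) by simp
qed

lemma fin_over:
  assumes K: "subfield K R" and F: "subfield F R" and "K \<subseteq> F" "dimension n K E" "subalgebra F E R"
  shows "\<exists>m. dimension m F E"
proof -
  obtain Vs where Vs: "set Vs \<subseteq> carrier R" "independent K Vs" "length Vs = n" "Span K Vs = E"
    using exists_base[OF K assms(4)] by blast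
  have sub: "set Vs \<subseteq> E" using Span_base_incl[OF K Vs(1)] Vs(4) by simp
  have "Span F Vs \<subseteq> E" by (rule subalgebra_Span_incl[OF F assms(5) sub])
  moreover have "E \<subseteq> Span F Vs"
    using Span_eq_combine_set[OF K Vs(1)] Span_eq_combine_set[OF F Vs(1)] Vs(4) assms(3) by blast
  ultimately have "E = Span F Vs" by blast
  thus ?thesis using Span_finite_dimension[OF F Vs(1)] unfolding finite_dimension_def by auto
qed

lemma key:
  fixes d :: 'a
  assumes dim4: "has_dim_over (center :: 'a set) UNIV 4" and dnc: "d \<notin> center"
  shows "{y. y * d = d * y} = {a * d + b | a b. a \<in> center \<and> b \<in> center}"
proof -
  note S1 = center_subfield
  obtain bs :: "'a list" where bs: "length bs = 4" "lin_indep_over center bs" "span_over center bs = UNIV"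
    using dim4 unfolding has_dim_over_def by auto
  have spanbs: "Span center bs = UNIV"
    using Span_eq_combine_set_length_version[OF S1, of bs] bs(3)
    unfolding span_over_def lin_comb_combine by simp
  have indbs: "independent center bs"
  proof (rule trivial_combine_imp_independent[OF S1])
    show "set bs \<subseteq> carrier R" by simp
    fix Ks assume Ks: "set Ks \<subseteq> center" "combine Ks bs = \<zero>"
    define cs where "cs = take (length bs) Ks @ replicate (length bs - length Ks) 0"
    have "combine cs bs = combine Ks bs" unfolding cs_def
      using combine_append_replicate[of bs "take (length bs) Ks" "length bs - length Ks"] combine_take
      by simp
    hence "lin_comb cs bs = 0" using Ks lin_comb_combine by simp
    moreover have "length cs = length bs" unfolding cs_def by simp
    moreover have "set cs \<subseteq> center" unfolding cs_def using Ks(1) set_take_subset[of "length bs" Ks]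
      by (auto simp: center_def)
    ultimately have "set cs \<subseteq> {0}" using bs(2) unfolding lin_indep_over_def by blast
    thus "set (take (length bs) Ks) \<subseteq> {\<zero>}" unfolding cs_def by simp
  qed
  have S2: "dimension 4 center UNIV"
    using dimensionI[OF S1 indbs] spanbs bs(1) by simp
  define C where "C = comm {d}"
  define Z where "Z = comm C"
  have dC: "d \<in> C" unfolding C_def comm_def by simp
  have SZ: "subfield Z R"
  proof (rule subfield_mk)
    show "1 \<in> Z" unfolding Z_def by (rule comm_1)
    show "x + y \<in> Z" if "x \<in> Z" "y \<in> Z" for x y using that unfolding Z_def by (rule comm_add)
    show "x * y \<in> Z" if "x \<in> Z" "y \<in> Z" for x y using that unfolding Z_def by (rule comm_mul)
    show "- x \<in> Z" if "x \<in> Z" for x using that unfolding Z_def by (rule comm_neg)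
    show "inverse x \<in> Z" if "x \<in> Z" for x using that unfolding Z_def by (rule comm_inv)
    show "x * y = y * x" if "x \<in> Z" "y \<in> Z" for x y
    proof -
      have "y * d = d * y" using that(2) dC unfolding Z_def comm_def by blast
      hence "y \<in> C" unfolding C_def comm_def by blast
      thus ?thesis using that(1) unfolding Z_def comm_def by blast
    qed
  qed
  have cZ: "center \<subseteq> Z" unfolding Z_def center_def comm_def by blast
  have ZC: "Z \<subseteq> C"
  proof
    fix z assume "z \<in> Z"
    hence "z * d = d * z" using dC unfolding Z_def comm_def by blast
    thus "z \<in> C" unfolding C_def comm_def by blast
  qed
  have dZ: "d \<in> Z"
  proof -
    have "d * y = y * d" if "y \<in> C" for y
    proof -
      have "y * d = d * y" using that unfolding C_def comm_def by blast
      thus ?thesis by simp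
    qed
    thus ?thesis unfolding Z_def comm_def by blast
  qed
  have SC: "subring C R"
    by (rule subring_mk) (auto simp: C_def intro: comm_1 comm_add comm_mul comm_neg)
  have Cmul: "k * v \<in> C" if "k \<in> C" "v \<in> C" for k v
    using that unfolding C_def by (rule comm_mul)
  have subZ: "subalgebra center Z R"
    by (rule subalg_mk[OF subfieldE(1)[OF SZ]]) (use cZ subringE(6)[OF subfieldE(1)[OF SZ]] in auto)
  have subC: "subalgebra center C R"
    by (rule subalg_mk[OF SC]) (use cZ ZC Cmul in blast)
  have subZC: "subalgebra Z C R"
    by (rule subalg_mk[OF SC]) (use ZC Cmul in blast)
  have subZU: "subalgebra Z UNIV R" using carrier_is_subalgebra[of Z] by simp
  have fD: "finite_dimension center UNIV" using finite_dimensionI[OF S2] .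
  have one_nin: "1 \<notin> Span center []" by simp
  have ind1: "independent center [1]" using li_Cons[of 1 center "[]"] one_nin by simp
  have dnot: "d \<notin> Span center [1]"
  proof
    assume "d \<in> Span center [1]"
    then obtain Ks where "set Ks \<subseteq> center" "length Ks = 1" "d = combine Ks [1]"
      using Span_mem_iff_length_version[OF S1, of "[1]" d] by auto
    then obtain k where "k \<in> center" "d = k" by (auto simp: length_Suc_conv)
    thus False using dnc by simp
  qed
  have ind2: "independent center [d, 1]" using li_Cons[of d center "[1]"] dnot ind1 by simp
  obtain k where dimZ: "dimension k center Z"
    using subalbegra_incl_imp_finite_dimension[OF S1 fD subZ] unfolding finite_dimension_def by auto
  obtain mZ where dimZU: "dimension mZ Z UNIV" using fin_over[OF S1 SZ cZ S2 subZU] by blast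
  have "dimension (k * mZ) center UNIV" using telescopic_base[OF S1 SZ dimZ dimZU] .
  hence kmZ: "k * mZ = 4" using dimension_is_inj[OF S1 _ S2] by blast
  have k2: "2 \<le> k" using independent_length_le_dimension[OF S1 dimZ ind2] dZ cZ
    subringE(3)[OF subfieldE(1)[OF SZ]] by simp
  have k4: "k \<noteq> 4"
  proof
    assume "k = 4"
    hence "Z = UNIV" using full_dim[OF S1 S2] dimZ by simp
    hence "\<forall>x. x * d = d * x" using dC unfolding Z_def comm_def by blast
    thus False using dnc center_I by blast
  qed
  have k: "k = 2" using nat_aux[OF kmZ k2 k4] .
  obtain c where dimC: "dimension c center C"
    using subalbegra_incl_imp_finite_dimension[OF S1 fD subC] unfolding finite_dimension_def by auto
  obtain mC where dimCZ: "dimension mC Z C" using fin_over[OF S1 SZ cZ dimC subZC] by blast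
  have "dimension (k * mC) center C" using telescopic_base[OF S1 SZ dimZ dimCZ] .
  hence cm: "c = 2 * mC" using dimension_is_inj[OF S1 dimC] k by blast
  have dsub: "set [d, 1] \<subseteq> C" using dC comm_1[of "{d}"] unfolding C_def by simp
  have c2: "2 \<le> c" using independent_length_le_dimension[OF S1 dimC ind2 dsub] by simp
  have c4: "c \<le> 4"
  proof -
    obtain Vs where Vs: "set Vs \<subseteq> carrier R" "independent center Vs" "length Vs = c"
      using exists_base[OF S1 dimC] by blast
    thus ?thesis using independent_length_le_dimension[OF S1 S2 Vs(2)] by simp
  qed
  have c4': "c \<noteq> 4"
  proof
    assume "c = 4"
    hence "C = UNIV" using full_dim[OF S1 S2] dimC by simp
    hence "\<forall>x. x * d = d * x" unfolding C_def comm_def by blast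
    thus False using dnc center_I by blast
  qed
  have "c = 2" using cm c2 c4 c4' by presburger
  hence SpC: "Span center [d, 1] = C"
    using independent_length_eq_dimension[OF S1 dimC ind2 dsub] by simp
  have "Span center [d, 1] = {a * d + b | a b. a \<in> center \<and> b \<in> center}"
  proof
    show "Span center [d, 1] \<subseteq> {a * d + b | a b. a \<in> center \<and> b \<in> center}"
    proof
      fix x assume "x \<in> Span center [d, 1]"
      then obtain Ks where "set Ks \<subseteq> center" "length Ks = 2" "x = combine Ks [d, 1]"
        using Span_mem_iff_length_version[OF S1, of "[d,1]" x] by auto
      then obtain a b where "a \<in> center" "b \<in> center" "x = a * d + b"
        by (auto simp: length_Suc_conv numeral_2_eq_2)
      thus "x \<in> {a * d + b | a b. a \<in> center \<and> b \<in> center}" by blast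
    qed
    show "{a * d + b | a b. a \<in> center \<and> b \<in> center} \<subseteq> Span center [d, 1]"
    proof
      fix x assume "x \<in> {a * d + b | a b. a \<in> center \<and> b \<in> center}"
      then obtain a b where ab: "a \<in> center" "b \<in> center" "x = a * d + b" by blast
      have sc: "set [d, 1] \<subseteq> carrier R" by simp
      have "\<exists>Ks. set Ks \<subseteq> center \<and> length Ks = length [d, 1] \<and> x = combine Ks [d, 1]"
        using ab by (intro exI[of _ "[a, b]"]) simp
      thus "x \<in> Span center [d, 1]"
        using Span_mem_iff_length_version[OF S1 sc, of x] by blast
    qed
  qed
  thus ?thesis using SpC unfolding C_def comm_def by simp
qed

end


lemma adjoin_comm:
  fixes d x :: "'a::division_ring"
  assumes "d * x = x * d" "\<forall>i<n. c i \<in> center"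
  shows "(\<Sum>i<n. c i * d ^ i) * x = x * (\<Sum>i<n. c i * d ^ i)"
proof (rule sum_comm)
  fix i assume i: "i < n"
  have hc: "\<And>y. c i * y = y * c i" using assms(2) i unfolding center_def by blast
  have hd: "d ^ i * x = x * d ^ i" by (rule pow_comm[OF assms(1)])
  have "c i * d ^ i * x = c i * (x * d ^ i)" by (simp add: mult.assoc hd)
  also have "\<dots> = (c i * x) * d ^ i" by (rule mult.assoc[symmetric])
  also have "\<dots> = x * (c i * d ^ i)" by (simp only: hc mult.assoc)
  finally show "c i * d ^ i * x = x * (c i * d ^ i)" .
qed

lemma adjoin_memI:
  "x = (\<Sum>i<n. c i * d ^ i) \<Longrightarrow> \<forall>i<n. c i \<in> K \<Longrightarrow> x \<in> adjoin K d"
  unfolding adjoin_def by blast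

lemma in_adjoin: "c \<in> center \<Longrightarrow> c \<in> adjoin center d"
  unfolding adjoin_def
  by (rule CollectI, rule exI[of _ "\<lambda>_. c"], rule exI[of _ 1]) simp

theorem lemma2p2:
  fixes \<rho> :: "'a::division_ring \<Rightarrow> 'a" and d :: 'a and F' :: "'a set"
  assumes "nonarch_local_field_odd (center :: 'a set)"
    and "has_dim_over (center :: 'a set) UNIV 4"
    and "orthogonal_anti_involution \<rho>"
    and "d \<noteq> 0" and "\<rho> d = d"
    and "is_subfield F'" and "center \<subseteq> F'" and "\<forall>x\<in>F'. \<rho> x = x"
    and "K_isomorphic center (adjoin center d) F'"
  shows "(\<exists>g. g \<noteq> 0 \<and> (\<lambda>x. g * x * \<rho> g) ` adjoin center d = F') \<and>
         (d \<notin> center \<longrightarrow>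
            (\<forall>g. g \<noteq> 0 \<and> (\<lambda>x. g * x * inverse g) ` adjoin center d = F' \<longrightarrow>
                 (\<lambda>x. g * x * \<rho> g) ` adjoin center d = F'))"
proof -
  define A where "A = adjoin center d"
  have radd: "\<And>x y. \<rho> (x + y) = \<rho> x + \<rho> y"
    and rmul: "\<And>x y. \<rho> (x * y) = \<rho> y * \<rho> x"
    and rr: "\<And>x. \<rho> (\<rho> x) = x"
    using assms(3) unfolding orthogonal_anti_involution_def by blast+
  have r1: "\<rho> 1 = 1"
  proof -
    have "\<rho> (\<rho> 1 * 1) = \<rho> 1 * \<rho> (\<rho> 1)" by (rule rmul)
    thus ?thesis using rr[of 1] by simp
  qed
  have r0: "\<rho> 0 = 0" using radd[of 0 0] by simp
  obtain \<phi> where bij: "bij_betw \<phi> A F'"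
    and hom: "\<forall>x\<in>A. \<forall>y\<in>A. \<phi> (x + y) = \<phi> x + \<phi> y \<and> \<phi> (x * y) = \<phi> x * \<phi> y"
    and fixc: "\<forall>c\<in>center. \<phi> c = c"
    using assms(9) unfolding K_isomorphic_def A_def by blast
  have F'mul: "\<And>x y. x \<in> F' \<Longrightarrow> y \<in> F' \<Longrightarrow> x * y \<in> F'"
    and F'inv: "\<And>x. x \<in> F' \<Longrightarrow> inverse x \<in> F'"
    using assms(6) unfolding is_subfield_def by blast+
  show ?thesis
  proof (cases "d \<in> center")
    case True
    have Ac: "A = center"
    proof
      show "A \<subseteq> center"
      proof
        fix x assume "x \<in> A"
        then obtain c n where x: "x = (\<Sum>i<n. c i * d ^ i)" "\<forall>i<n. c i \<in> center"
          unfolding A_def adjoin_def by blast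
        have "x * y = y * x" for y
        proof -
          have "d * y = y * d" using True unfolding center_def by blast
          thus ?thesis using adjoin_comm[OF _ x(2)] x(1) by blast
        qed
        thus "x \<in> center" unfolding center_def by blast
      qed
      show "center \<subseteq> A" unfolding A_def using in_adjoin by blast
    qed
    have "F' = \<phi> ` A" using bij by (simp add: bij_betw_def)
    also have "\<dots> = center" using fixc Ac by simp
    finally have F'c: "F' = center" .
    have "(\<lambda>x. 1 * x * \<rho> 1) ` A = F'" using Ac F'c r1 by simp
    thus ?thesis using True A_def by (metis one_neq_zero)
  next
    case False
    have key: "{y. y * d = d * y} = {a * d + b | a b. a \<in> center \<and> b \<in> center}"
      using DRL.key[OF DRL_DR assms(2) False] .
    have memA: "a * d + b \<in> A" if "a \<in> center" "b \<in> center" for a b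
    proof -
      define c where "c = (\<lambda>i::nat. if i = 0 then b else a)"
      have "(\<Sum>i<2. c i * d ^ i) = a * d + b" by (simp add: c_def numeral_2_eq_2)
      moreover have "\<forall>i<2. c i \<in> center" using that by (simp add: c_def)
      ultimately have "a * d + b = (\<Sum>i<2. c i * d ^ i) \<and> (\<forall>i<2. c i \<in> center)" by simp
      thus ?thesis unfolding A_def using adjoin_memI by blast
    qed
    have Aeq: "A = {a * d + b | a b. a \<in> center \<and> b \<in> center}"
    proof
      show "A \<subseteq> {a * d + b | a b. a \<in> center \<and> b \<in> center}"
      proof
        fix x assume "x \<in> A"
        then obtain c n where x: "x = (\<Sum>i<n. c i * d ^ i)" "\<forall>i<n. c i \<in> center"
          unfolding A_def adjoin_def by blast
        have "x * d = d * x" using adjoin_comm[OF _ x(2), of d] x(1) by simp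
        thus "x \<in> {a * d + b | a b. a \<in> center \<and> b \<in> center}" using key by blast
      qed
      show "{a * d + b | a b. a \<in> center \<and> b \<in> center} \<subseteq> A" using memA by blast
    qed
    have c0: "(0::'a) \<in> center" and c1: "(1::'a) \<in> center" unfolding center_def by simp_all
    have dA: "d \<in> A" using memA[OF c1 c0] by simp
    have cA: "c \<in> A" if "c \<in> center" for c using memA[OF c0 that] by simp
    have CA: "y \<in> A" if "y * d = d * y" for y using that key Aeq by blast
    have P2: "(\<lambda>x. g * x * \<rho> g) ` A = F'"
      if g0: "g \<noteq> 0" and conj: "(\<lambda>x. g * x * inverse g) ` A = F'" for g
    proof -
      have rg0: "\<rho> g \<noteq> 0"
      proof
        assume "\<rho> g = 0" hence "g = 0" using rr[of g] r0 by simp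
        thus False using g0 by simp
      qed
      have "g * d * inverse g \<in> F'" using conj dA by blast
      hence fix1: "\<rho> (g * d * inverse g) = g * d * inverse g" using assms(8) by blast
      have "\<rho> g * \<rho> (inverse g) = 1" using rmul[of "inverse g" g] g0 r1 by simp
      hence rinv: "\<rho> (inverse g) = inverse (\<rho> g)" using inverse_unique by metis
      have "\<rho> (g * d * inverse g) = inverse (\<rho> g) * (d * \<rho> g)"
        using rmul assms(5) rinv by simp
      hence E: "inverse (\<rho> g) * (d * \<rho> g) = g * d * inverse g" using fix1 by simp
      have "\<rho> g * (inverse (\<rho> g) * (d * \<rho> g)) * g = d * (\<rho> g * g)"
        using rg0 by (simp add: mult.assoc)
      moreover have "\<rho> g * (g * d * inverse g) * g = \<rho> g * g * d"
        using g0 by (simp add: mult.assoc)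
      ultimately have "(\<rho> g * g) * d = d * (\<rho> g * g)" using E by simp
      hence yA: "\<rho> g * g \<in> A" by (rule CA)
      have neq: "g * \<rho> g = g * (\<rho> g * g) * inverse g" using g0 by (simp add: mult.assoc)
      have nF: "g * \<rho> g \<in> F'" using conj yA neq by blast
      have n0: "g * \<rho> g \<noteq> 0" using g0 rg0 by simp
      show ?thesis
      proof
        show "(\<lambda>x. g * x * \<rho> g) ` A \<subseteq> F'"
        proof
          fix z assume "z \<in> (\<lambda>x. g * x * \<rho> g) ` A"
          then obtain x where x: "x \<in> A" "z = g * x * \<rho> g" by blast
          have "z = (g * x * inverse g) * (g * \<rho> g)" using x(2) g0 by (simp add: mult.assoc)
          moreover have "g * x * inverse g \<in> F'" using conj x(1) by blast
          ultimately show "z \<in> F'" using F'mul nF by simp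
        qed
        show "F' \<subseteq> (\<lambda>x. g * x * \<rho> g) ` A"
        proof
          fix f assume f: "f \<in> F'"
          have "f * inverse (g * \<rho> g) \<in> F'" using F'mul F'inv f nF by blast
          hence "f * inverse (g * \<rho> g) \<in> (\<lambda>x. g * x * inverse g) ` A" unfolding conj .
          then obtain x where x0: "x \<in> A" "f * inverse (g * \<rho> g) = g * x * inverse g"
            by (rule imageE)
          have x: "x \<in> A" "g * x * inverse g = f * inverse (g * \<rho> g)" using x0 by simp_all
          have "g * x * \<rho> g = (g * x * inverse g) * (g * \<rho> g)" using g0 by (simp add: mult.assoc)
          also have "\<dots> = f" using x(2) n0 by (simp add: mult.assoc)
          finally show "f \<in> (\<lambda>x. g * x * \<rho> g) ` A" using x(1) by (metis image_eqI)
        qed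
      qed
    qed
    have "d * d * d = d * (d * d)" by (simp add: mult.assoc)
    hence "d * d \<in> {y. y * d = d * y}" by simp
    then obtain a b where ab: "a \<in> center" "b \<in> center" "d * d = a * d + b" using key by blast
    define d' where "d' = \<phi> d"
    have adA: "a * d \<in> A" using memA[OF ab(1) c0] by simp
    have "\<phi> (d * d) = d' * d'" using hom dA unfolding d'_def by blast
    moreover have "\<phi> (a * d + b) = a * d' + b"
    proof -
      have "\<phi> (a * d + b) = \<phi> (a * d) + \<phi> b" using hom adA cA[OF ab(2)] by blast
      also have "\<phi> (a * d) = \<phi> a * \<phi> d" using hom cA[OF ab(1)] dA by blast
      finally show ?thesis using fixc ab unfolding d'_def by simp
    qed
    ultimately have dd': "d' * d' = a * d' + b" using ab(3) by simp
    have ha: "\<And>y. a * y = y * a" and hb: "\<And>y. b * y = y * b"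
      using ab unfolding center_def by blast+
    define G where "G = (\<lambda>x. d' * x - x * (a - d))"
    have Gc: "d' * G x = G x * d" for x
    proof -
      have "d' * G x = (d' * d') * x - d' * x * a + d' * x * d"
        by (simp add: G_def algebra_simps)
      also have "\<dots> = a * d' * x + b * x - d' * x * a + d' * x * d"
        by (simp add: dd' algebra_simps)
      also have "\<dots> = d' * x * d + x * b"
        using ha[of "d' * x"] hb[of x] by (simp add: algebra_simps)
      also have "\<dots> = d' * x * d - x * (a * d - (a * d + b))" by simp
      also have "\<dots> = d' * x * d - x * (a * d - d * d)" by (simp add: ab(3))
      also have "\<dots> = G x * d" by (simp add: G_def algebra_simps)
      finally show ?thesis .
    qed
    obtain x0 where x0: "x0 * d \<noteq> d * x0" using False center_I by blast
    obtain g where g0: "g \<noteq> 0" and gc: "d' * g = g * d"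
    proof (cases "G 1 = 0")
      case True
      hence dd: "d' = a - d" by (simp add: G_def)
      have "G x0 = (a - d) * x0 - x0 * (a - d)" unfolding G_def dd by (rule refl)
      also have "\<dots> = x0 * d - d * x0" using ha[of x0] by (simp add: algebra_simps)
      finally have "G x0 = x0 * d - d * x0" .
      hence "G x0 \<noteq> 0" using x0 by simp
      thus ?thesis using that Gc by blast
    next
      case False
      thus ?thesis using that Gc by blast
    qed
    have gd: "g * d * inverse g = d'"
    proof -
      have "g * d * inverse g = d' * g * inverse g" using gc by simp
      thus ?thesis using g0 by (simp add: mult.assoc)
    qed
    have conjeq: "(\<lambda>x. g * x * inverse g) ` A = F'"
    proof -
      have "g * x * inverse g = \<phi> x" if xA: "x \<in> A" for x
      proof -
        obtain a' b' where x: "a' \<in> center" "b' \<in> center" "x = a' * d + b'" using xA Aeq by blast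
        have ga0: "a' * g = g * a'" and gb0: "b' * g = g * b'" using x unfolding center_def by blast+
        note ga = ga0[symmetric] and gb = gb0[symmetric]
        have "g * x * inverse g = (g * a') * d * inverse g + (g * b') * inverse g"
          using x(3) by (simp add: algebra_simps)
        also have "\<dots> = a' * (g * d * inverse g) + b' * (g * inverse g)"
          by (simp only: ga gb mult.assoc)
        also have "\<dots> = a' * d' + b'" using gd g0 by simp
        also have "\<dots> = \<phi> x"
        proof -
          have "\<phi> x = \<phi> (a' * d) + \<phi> b'" using hom x memA[OF x(1) c0] cA[OF x(2)] by simp
          also have "\<phi> (a' * d) = \<phi> a' * \<phi> d" using hom cA[OF x(1)] dA by blast
          finally show ?thesis using fixc x unfolding d'_def by simp
        qed
        finally show ?thesis .
      qed
      hence "(\<lambda>x. g * x * inverse g) ` A = \<phi> ` A" by (rule image_cong[OF refl])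
      thus ?thesis using bij by (simp add: bij_betw_def)
    qed
    have "(\<lambda>x. g * x * \<rho> g) ` A = F'" using P2[OF g0 conjeq] .
    thus ?thesis using P2 g0 unfolding A_def by blast
  qed
qed

end
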